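(* Let $\mathcal A$ be a linear time-invariant algorithm with state-space realization $(A,B,C,D)$. Then an algorithm $\mathcal B$ satisfies $\mathcal B=\mathcal A^2$ if and only if the transfer function of $\mathcal B$ is $$\begin{bmatrix} C(zI-A^2)^{-1}AB+D & C(zI-A^2)^{-1}B\\ CA(zI-A^2)^{-1}AB+CB & CA(zI-A^2)^{-1}B+D\end{bmatrix}.$$
   Context: A linear time-invariant algorithm $\mathcal A$ with state-space realization $(A,B,C,D)$ and oracle map $\phi$ generates $x^{k+1}=Ax^k+Bu^k$, $y^k=Cx^k+Du^k$, $u^k=\phi(y^k)$; it can be viewed as the map $x^k\mapsto x^{k+1}$. Its transfer function is $\hat H(z)=C(zI-A)^{-1}B+D$. The algorithm $\mathcal A^2$ (repetition) performs two iterations of $\mathcal A$ as a single iteration: its state is $x^{2k}$ of $\mathcal A$, its oracle outputs in one iteration are $(u^{2k},u^{2k+1})$ and its oracle arguments are $(y^{2k},y^{2k+1})$, in this order. *)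

theory Defs
  imports "Jordan_Normal_Form.Gauss_Jordan_Elimination" "Jordan_Normal_Form.Determinant"
begin

text \<open>A linear time-invariant algorithm given by a state-space realization (A,B,C,D):
  x(k+1) = A x(k) + B u(k),  y(k) = C x(k) + D u(k),  u(k) = phi(y(k)).
  Matrices are real; n = state dimension, m = oracle-output (input) dimension,
  p = oracle-argument (output) dimension.\<close>

type_synonym realization = "real mat \<times> real mat \<times> real mat \<times> real mat"

definition wf_real :: "realization \<Rightarrow> nat \<Rightarrow> nat \<Rightarrow> nat \<Rightarrow> bool" where
  "wf_real S n m p = (case S of (A, B, C, D) \<Rightarrow>
      A \<in> carrier_mat n n \<and> B \<in> carrier_mat n m \<and> C \<in> carrier_mat p n \<and> D \<in> carrier_mat p m)"

definition state_mat :: "realization \<Rightarrow> real mat" where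
  "state_mat S = fst S"

definition cm :: "real mat \<Rightarrow> complex mat" where
  "cm M = map_mat complex_of_real M"

text \<open>Inverse of a square complex matrix (meaningful when it is invertible).\<close>
definition minv :: "complex mat \<Rightarrow> complex mat" where
  "minv M = the (mat_inverse M)"

definition zIm :: "complex \<Rightarrow> real mat \<Rightarrow> complex mat" where
  "zIm z A = z \<cdot>\<^sub>m 1\<^sub>m (dim_row A) - cm A"

definition transfer :: "realization \<Rightarrow> complex \<Rightarrow> complex mat" where
  "transfer S z = (case S of (A, B, C, D) \<Rightarrow> cm C * minv (zIm z A) * cm B + cm D)"

text \<open>Two transfer functions (rational matrix functions) are equal iff they agree at every z
  at which both are defined.\<close>
definition same_transfer :: "realization \<Rightarrow> realization \<Rightarrow> bool" where
  "same_transfer S T = (\<forall>z. det (zIm z (state_mat S)) \<noteq> 0 \<longrightarrow> det (zIm z (state_mat T)) \<noteq> 0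
       \<longrightarrow> transfer S z = transfer T z)"

text \<open>R is a realization of the repetition A^2 of the algorithm with realization S=(A,B,C,D)
  (state dims n, input dim m, output dim p): R has state x(2k), input (u(2k),u(2k+1)),
  output (y(2k),y(2k+1)), and one iteration of R performs exactly two iterations of S.\<close>
definition is_repetition :: "realization \<Rightarrow> nat \<Rightarrow> nat \<Rightarrow> nat \<Rightarrow> realization \<Rightarrow> bool" where
  "is_repetition S n m p R = (case S of (A, B, C, D) \<Rightarrow> case R of (A2, B2, C2, D2) \<Rightarrow>
     wf_real R n (2*m) (2*p) \<and>
     (\<forall>x u0 u1. x \<in> carrier_vec n \<longrightarrow> u0 \<in> carrier_vec m \<longrightarrow> u1 \<in> carrier_vec m \<longrightarrow>
        (let x1 = A *\<^sub>v x + B *\<^sub>v u0;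
             x2 = A *\<^sub>v x1 + B *\<^sub>v u1;
             y0 = C *\<^sub>v x + D *\<^sub>v u0;
             y1 = C *\<^sub>v x1 + D *\<^sub>v u1
         in A2 *\<^sub>v x + B2 *\<^sub>v (u0 @\<^sub>v u1) = x2 \<and>
            C2 *\<^sub>v x + D2 *\<^sub>v (u0 @\<^sub>v u1) = y0 @\<^sub>v y1)))"

text \<open>LTI algorithms are identified when they have the same transfer function;
  "T = S^2" means T equals the repetition of S in this sense.\<close>
definition eq_repetition :: "realization \<Rightarrow> realization \<Rightarrow> nat \<Rightarrow> nat \<Rightarrow> nat \<Rightarrow> bool" where
  "eq_repetition T S n m p = (\<exists>R. is_repetition S n m p R \<and> same_transfer T R)"

end

theory Submission
  imports Defs
begin

lemma mat_zero_vec: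
  fixes X :: "'a :: comm_ring_1 mat"
  assumes "X \<in> carrier_mat r a"
  shows "X *\<^sub>v 0\<^sub>v a = 0\<^sub>v r"
proof (rule eq_vecI)
  fix i assume "i < dim_vec (0\<^sub>v r :: 'a vec)"
  then show "(X *\<^sub>v 0\<^sub>v a) $ i = 0\<^sub>v r $ i" using assms
    by (simp add: scalar_prod_right_zero[of _ a])
qed (use assms in auto)

lemma mat_zero_vec':
  assumes "v \<in> carrier_vec m"
  shows "(0\<^sub>m p m :: 'a :: comm_ring_1 mat) *\<^sub>v v = 0\<^sub>v p"
  by (rule eq_vecI) (use assms in auto)

lemma mat_eq_by_vec:
  fixes X Y :: "'a :: comm_ring_1 mat"
  assumes "X \<in> carrier_mat nr nc" "Y \<in> carrier_mat nr nc"
    and "\<And>v. v \<in> carrier_vec nc \<Longrightarrow> X *\<^sub>v v = Y *\<^sub>v v"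
  shows "X = Y"
proof -
  have e: "X $$ (i, j) = Y $$ (i, j)" if i: "i < nr" and j: "j < nc" for i j
  proof -
    have "X *\<^sub>v unit_vec nc j = Y *\<^sub>v unit_vec nc j" using assms(3) by simp
    hence "(X *\<^sub>v unit_vec nc j) $ i = (Y *\<^sub>v unit_vec nc j) $ i" by simp
    moreover have "(X *\<^sub>v unit_vec nc j) $ i = X $$ (i, j)"
      using assms(1) i j by (simp add: scalar_prod_right_unit[of j nc])
    moreover have "(Y *\<^sub>v unit_vec nc j) $ i = Y $$ (i, j)"
      using assms(2) i j by (simp add: scalar_prod_right_unit[of j nc])
    ultimately show ?thesis by metis
  qed
  show ?thesis by (rule eq_matI) (use assms e in auto)
qed

lemma split_lin:
  fixes X X' :: "'a :: comm_ring_1 mat"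
  assumes "X \<in> carrier_mat r a" "X' \<in> carrier_mat r a" "Y \<in> carrier_mat r b" "Y' \<in> carrier_mat r b"
    and "\<And>x v. x \<in> carrier_vec a \<Longrightarrow> v \<in> carrier_vec b \<Longrightarrow> X *\<^sub>v x + Y *\<^sub>v v = X' *\<^sub>v x + Y' *\<^sub>v v"
  shows "X = X' \<and> Y = Y'"
proof
  show "X = X'"
  proof (rule mat_eq_by_vec[OF assms(1,2)])
    fix x :: "'a vec" assume x: "x \<in> carrier_vec a"
    have "X *\<^sub>v x + Y *\<^sub>v 0\<^sub>v b = X' *\<^sub>v x + Y' *\<^sub>v 0\<^sub>v b" using assms(5)[OF x] by simp
    thus "X *\<^sub>v x = X' *\<^sub>v x" using assms x
      by (simp add: mat_zero_vec[of Y r b] mat_zero_vec[of Y' r b] right_zero_vec[of _ r])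
  qed
  show "Y = Y'"
  proof (rule mat_eq_by_vec[OF assms(3,4)])
    fix x :: "'a vec" assume x: "x \<in> carrier_vec b"
    have "X *\<^sub>v 0\<^sub>v a + Y *\<^sub>v x = X' *\<^sub>v 0\<^sub>v a + Y' *\<^sub>v x" using assms(5)[OF _ x] by simp
    thus "Y *\<^sub>v x = Y' *\<^sub>v x" using assms x
      by (simp add: mat_zero_vec[of X r a] mat_zero_vec[of X' r a] left_zero_vec[of _ r])
  qed
qed

definition canon :: "real mat \<Rightarrow> real mat \<Rightarrow> real mat \<Rightarrow> real mat \<Rightarrow> nat \<Rightarrow> nat \<Rightarrow> nat \<Rightarrow> realization" where
  "canon A B C D n m p = (A * A, four_block_mat (A * B) B (0\<^sub>m 0 m) (0\<^sub>m 0 m),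
     C @\<^sub>r (C * A), four_block_mat D (0\<^sub>m p m) (C * B) D)"

lemma app_zero_vec: "v @\<^sub>v (w :: 'a vec) = v" if "dim_vec w = 0"
  using that by (intro eq_vecI) auto

lemma add_app_vec:
  fixes a b c d :: "'a :: monoid_add vec"
  assumes "a \<in> carrier_vec n" "b \<in> carrier_vec n" "c \<in> carrier_vec k" "d \<in> carrier_vec k"
  shows "(a + b) @\<^sub>v (c + d) = (a @\<^sub>v c) + (b @\<^sub>v d)"
  by (rule eq_vecI) (use assms in auto)

lemma canon_rep:
  assumes "wf_real (A, B, C, D) n m p"
  shows "is_repetition (A, B, C, D) n m p (canon A B C D n m p)"
proof -
  have c: "A \<in> carrier_mat n n" "B \<in> carrier_mat n m" "C \<in> carrier_mat p n" "D \<in> carrier_mat p m"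
    using assms unfolding wf_real_def by auto
  have w1: "four_block_mat (A * B) B (0\<^sub>m 0 m) (0\<^sub>m 0 m) \<in> carrier_mat n (2 * m)"
  proof -
    have "A * B \<in> carrier_mat n m" using c by auto
    from four_block_carrier_mat[OF this, of "0\<^sub>m 0 m" 0 m B "0\<^sub>m 0 m"]
    show ?thesis by (simp add: mult_2)
  qed
  have w2: "A * A \<in> carrier_mat n n" using c by auto
  have w3: "C @\<^sub>r C * A \<in> carrier_mat (2 * p) n" using c
  proof -
    have "C * A \<in> carrier_mat p n" using c by auto
    hence "C @\<^sub>r C * A \<in> carrier_mat (p + p) n" using c by (intro carrier_append_rows)
    thus ?thesis by (simp add: mult_2)
  qed
  have w4: "four_block_mat D (0\<^sub>m p m) (C * B) D \<in> carrier_mat (2 * p) (2 * m)"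
    using four_block_carrier_mat[OF c(4) c(4), of "0\<^sub>m p m" "C * B"] by (simp add: mult_2)
  have eqs: "A * A *\<^sub>v x + four_block_mat (A * B) B (0\<^sub>m 0 m) (0\<^sub>m 0 m) *\<^sub>v (u0 @\<^sub>v u1) =
       A *\<^sub>v (A *\<^sub>v x + B *\<^sub>v u0) + B *\<^sub>v u1 \<and>
     (C @\<^sub>r C * A) *\<^sub>v x + four_block_mat D (0\<^sub>m p m) (C * B) D *\<^sub>v (u0 @\<^sub>v u1) =
       (C *\<^sub>v x + D *\<^sub>v u0) @\<^sub>v (C *\<^sub>v (A *\<^sub>v x + B *\<^sub>v u0) + D *\<^sub>v u1)"
    if x: "x \<in> carrier_vec n" and u: "u0 \<in> carrier_vec m" "u1 \<in> carrier_vec m" for x u0 u1 :: "real vec"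
  proof
    have "four_block_mat (A * B) B (0\<^sub>m 0 m) (0\<^sub>m 0 m) *\<^sub>v (u0 @\<^sub>v u1)
       = ((A * B) *\<^sub>v u0 + B *\<^sub>v u1) @\<^sub>v (0\<^sub>m 0 m *\<^sub>v u0 + 0\<^sub>m 0 m *\<^sub>v u1)"
      by (rule four_block_mat_mult_vec) (use c u in auto)
    also have "\<dots> = (A * B) *\<^sub>v u0 + B *\<^sub>v u1" by (rule app_zero_vec) simp
    finally have e1: "four_block_mat (A * B) B (0\<^sub>m 0 m) (0\<^sub>m 0 m) *\<^sub>v (u0 @\<^sub>v u1) = (A * B) *\<^sub>v u0 + B *\<^sub>v u1" .
    have a1: "A * A *\<^sub>v x = A *\<^sub>v (A *\<^sub>v x)" using c x by (simp add: assoc_mult_mat_vec)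
    have a2: "(A * B) *\<^sub>v u0 = A *\<^sub>v (B *\<^sub>v u0)" using c u by (simp add: assoc_mult_mat_vec)
    have a3: "A *\<^sub>v (A *\<^sub>v x + B *\<^sub>v u0) = A *\<^sub>v (A *\<^sub>v x) + A *\<^sub>v (B *\<^sub>v u0)"
      using c x u by (simp add: mult_add_distrib_mat_vec)
    show "A * A *\<^sub>v x + four_block_mat (A * B) B (0\<^sub>m 0 m) (0\<^sub>m 0 m) *\<^sub>v (u0 @\<^sub>v u1) =
       A *\<^sub>v (A *\<^sub>v x + B *\<^sub>v u0) + B *\<^sub>v u1"
      unfolding e1 a1 a2 a3 by (rule assoc_add_vec[symmetric, of _ n]) (use c x u in auto)
    have e2: "(C @\<^sub>r C * A) *\<^sub>v x = (C *\<^sub>v x) @\<^sub>v ((C * A) *\<^sub>v x)"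
      by (rule mat_mult_append) (use c x in auto)
    have e3: "four_block_mat D (0\<^sub>m p m) (C * B) D *\<^sub>v (u0 @\<^sub>v u1) = (D *\<^sub>v u0 + 0\<^sub>m p m *\<^sub>v u1) @\<^sub>v ((C * B) *\<^sub>v u0 + D *\<^sub>v u1)"
      by (rule four_block_mat_mult_vec) (use c u in auto)
    have z: "0\<^sub>m p m *\<^sub>v u1 = 0\<^sub>v p" by (rule mat_zero_vec') (use u in auto)
    have b1: "(C * A) *\<^sub>v x = C *\<^sub>v (A *\<^sub>v x)" using c x by (simp add: assoc_mult_mat_vec)
    have b2: "(C * B) *\<^sub>v u0 = C *\<^sub>v (B *\<^sub>v u0)" using c u by (simp add: assoc_mult_mat_vec)
    have b3: "C *\<^sub>v (A *\<^sub>v x + B *\<^sub>v u0) = C *\<^sub>v (A *\<^sub>v x) + C *\<^sub>v (B *\<^sub>v u0)"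
      using c x u by (simp add: mult_add_distrib_mat_vec)
    have "(C @\<^sub>r C * A) *\<^sub>v x + four_block_mat D (0\<^sub>m p m) (C * B) D *\<^sub>v (u0 @\<^sub>v u1)
      = (C *\<^sub>v x + (D *\<^sub>v u0 + 0\<^sub>v p)) @\<^sub>v (C *\<^sub>v (A *\<^sub>v x) + (C *\<^sub>v (B *\<^sub>v u0) + D *\<^sub>v u1))"
      unfolding e2 e3 z b1 b2 by (rule add_app_vec[symmetric, of _ p _ _ p]) (use c x u in auto)
    also have "\<dots> = (C *\<^sub>v x + D *\<^sub>v u0) @\<^sub>v (C *\<^sub>v (A *\<^sub>v x + B *\<^sub>v u0) + D *\<^sub>v u1)"
      unfolding b3 using c x u by (simp add: assoc_add_vec[of _ p] right_zero_vec[of _ p])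
    finally show "(C @\<^sub>r C * A) *\<^sub>v x + four_block_mat D (0\<^sub>m p m) (C * B) D *\<^sub>v (u0 @\<^sub>v u1) =
       (C *\<^sub>v x + D *\<^sub>v u0) @\<^sub>v (C *\<^sub>v (A *\<^sub>v x + B *\<^sub>v u0) + D *\<^sub>v u1)" .
  qed
  show ?thesis unfolding is_repetition_def canon_def wf_real_def Let_def prod.case
  proof (intro conjI allI impI)
    fix x u0 u1 :: "real vec"
    assume "x \<in> carrier_vec n" "u0 \<in> carrier_vec m" "u1 \<in> carrier_vec m"
    from eqs[OF this] show "A * A *\<^sub>v x + four_block_mat (A * B) B (0\<^sub>m 0 m) (0\<^sub>m 0 m) *\<^sub>v (u0 @\<^sub>v u1) =
       A *\<^sub>v (A *\<^sub>v x + B *\<^sub>v u0) + B *\<^sub>v u1"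
      "(C @\<^sub>r C * A) *\<^sub>v x + four_block_mat D (0\<^sub>m p m) (C * B) D *\<^sub>v (u0 @\<^sub>v u1) =
       (C *\<^sub>v x + D *\<^sub>v u0) @\<^sub>v (C *\<^sub>v (A *\<^sub>v x + B *\<^sub>v u0) + D *\<^sub>v u1)" by auto
  qed (fact w1 w2 w3 w4)+
qed

lemma rep_unique:
  assumes h1: "is_repetition (A, B, C, D) n m p (A2, B2, C2, D2)"
    and h2: "is_repetition (A, B, C, D) n m p (A2', B2', C2', D2')"
  shows "(A2, B2, C2, D2) = (A2', B2', C2', D2')"
proof -
  have w: "A2 \<in> carrier_mat n n" "B2 \<in> carrier_mat n (2*m)" "C2 \<in> carrier_mat (2*p) n" "D2 \<in> carrier_mat (2*p) (2*m)"
    "A2' \<in> carrier_mat n n" "B2' \<in> carrier_mat n (2*m)" "C2' \<in> carrier_mat (2*p) n" "D2' \<in> carrier_mat (2*p) (2*m)"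
    using h1 h2 unfolding is_repetition_def wf_real_def prod.case by auto
  have H1: "A2 *\<^sub>v x + B2 *\<^sub>v (u0 @\<^sub>v u1) = A *\<^sub>v (A *\<^sub>v x + B *\<^sub>v u0) + B *\<^sub>v u1 \<and>
      C2 *\<^sub>v x + D2 *\<^sub>v (u0 @\<^sub>v u1) = (C *\<^sub>v x + D *\<^sub>v u0) @\<^sub>v (C *\<^sub>v (A *\<^sub>v x + B *\<^sub>v u0) + D *\<^sub>v u1)"
    if "x \<in> carrier_vec n" "u0 \<in> carrier_vec m" "u1 \<in> carrier_vec m" for x u0 u1
    using h1 that unfolding is_repetition_def prod.case Let_def by blast
  have H2: "A2' *\<^sub>v x + B2' *\<^sub>v (u0 @\<^sub>v u1) = A *\<^sub>v (A *\<^sub>v x + B *\<^sub>v u0) + B *\<^sub>v u1 \<and>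
      C2' *\<^sub>v x + D2' *\<^sub>v (u0 @\<^sub>v u1) = (C *\<^sub>v x + D *\<^sub>v u0) @\<^sub>v (C *\<^sub>v (A *\<^sub>v x + B *\<^sub>v u0) + D *\<^sub>v u1)"
    if "x \<in> carrier_vec n" "u0 \<in> carrier_vec m" "u1 \<in> carrier_vec m" for x u0 u1
    using h2 that unfolding is_repetition_def prod.case Let_def by blast
  have e: "A2 *\<^sub>v x + B2 *\<^sub>v v = A2' *\<^sub>v x + B2' *\<^sub>v v \<and> C2 *\<^sub>v x + D2 *\<^sub>v v = C2' *\<^sub>v x + D2' *\<^sub>v v"
    if x: "x \<in> carrier_vec n" and v: "v \<in> carrier_vec (2*m)" for x v
  proof -
    have v': "v \<in> carrier_vec (m + m)" using v by (simp add: mult_2)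
    have vv: "v = vec_first v m @\<^sub>v vec_last v m" using vec_first_last_append[OF v'] by simp
    show ?thesis
      using H1[OF x vec_first_carrier[of v m] vec_last_carrier[of v m]] H2[OF x vec_first_carrier[of v m] vec_last_carrier[of v m]]
      by (simp only: vv[symmetric])
  qed
  have "A2 = A2' \<and> B2 = B2'" by (rule split_lin[OF w(1,5,2,6)]) (use e in blast)
  moreover have "C2 = C2' \<and> D2 = D2'" by (rule split_lin[OF w(3,7,4,8)]) (use e in blast)
  ultimately show ?thesis by simp
qed

lemma four_block_id:
  assumes "M \<in> carrier_mat n n"
  shows "four_block_mat M (0\<^sub>m n 0) (0\<^sub>m 0 n) (0\<^sub>m 0 0) = (M :: 'a :: zero mat)"
  by (rule eq_matI) (use assms in auto)

lemma block_calc: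
  fixes Cc CAc M ABc Bc Dc CBc :: "complex mat"
  assumes c: "Cc \<in> carrier_mat p n" "CAc \<in> carrier_mat p n" "M \<in> carrier_mat n n"
    "ABc \<in> carrier_mat n m" "Bc \<in> carrier_mat n m" "Dc \<in> carrier_mat p m" "CBc \<in> carrier_mat p m"
  shows "four_block_mat Cc (0\<^sub>m p 0) CAc (0\<^sub>m p 0) * M * four_block_mat ABc Bc (0\<^sub>m 0 m) (0\<^sub>m 0 m)
     + four_block_mat Dc (0\<^sub>m p m) CBc Dc
   = four_block_mat (Cc * M * ABc + Dc) (Cc * M * Bc) (CAc * M * ABc + CBc) (CAc * M * Bc + Dc)"
proof -
  have "four_block_mat Cc (0\<^sub>m p 0) CAc (0\<^sub>m p 0) * M
     = four_block_mat Cc (0\<^sub>m p 0) CAc (0\<^sub>m p 0) * four_block_mat M (0\<^sub>m n 0) (0\<^sub>m 0 n) (0\<^sub>m 0 0)"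
    using four_block_id[OF c(3)] by simp
  also have "\<dots> = four_block_mat (Cc * M + 0\<^sub>m p 0 * 0\<^sub>m 0 n) (Cc * 0\<^sub>m n 0 + 0\<^sub>m p 0 * 0\<^sub>m 0 0)
       (CAc * M + 0\<^sub>m p 0 * 0\<^sub>m 0 n) (CAc * 0\<^sub>m n 0 + 0\<^sub>m p 0 * 0\<^sub>m 0 0)"
    by (rule mult_four_block_mat) (use c in auto)
  also have "\<dots> = four_block_mat (Cc * M) (0\<^sub>m p 0) (CAc * M) (0\<^sub>m p 0)"
    using c by simp
  finally have s1: "four_block_mat Cc (0\<^sub>m p 0) CAc (0\<^sub>m p 0) * M = four_block_mat (Cc * M) (0\<^sub>m p 0) (CAc * M) (0\<^sub>m p 0)" .
  have "four_block_mat (Cc * M) (0\<^sub>m p 0) (CAc * M) (0\<^sub>m p 0) * four_block_mat ABc Bc (0\<^sub>m 0 m) (0\<^sub>m 0 m)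
    = four_block_mat (Cc * M * ABc + 0\<^sub>m p 0 * 0\<^sub>m 0 m) (Cc * M * Bc + 0\<^sub>m p 0 * 0\<^sub>m 0 m)
       (CAc * M * ABc + 0\<^sub>m p 0 * 0\<^sub>m 0 m) (CAc * M * Bc + 0\<^sub>m p 0 * 0\<^sub>m 0 m)"
    by (rule mult_four_block_mat) (use c in auto)
  also have "\<dots> = four_block_mat (Cc * M * ABc) (Cc * M * Bc) (CAc * M * ABc) (CAc * M * Bc)"
    using c by simp
  finally have s2: "four_block_mat (Cc * M) (0\<^sub>m p 0) (CAc * M) (0\<^sub>m p 0) * four_block_mat ABc Bc (0\<^sub>m 0 m) (0\<^sub>m 0 m)
     = four_block_mat (Cc * M * ABc) (Cc * M * Bc) (CAc * M * ABc) (CAc * M * Bc)" .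
  have "four_block_mat (Cc * M * ABc) (Cc * M * Bc) (CAc * M * ABc) (CAc * M * Bc) + four_block_mat Dc (0\<^sub>m p m) CBc Dc
    = four_block_mat (Cc * M * ABc + Dc) (Cc * M * Bc + 0\<^sub>m p m) (CAc * M * ABc + CBc) (CAc * M * Bc + Dc)"
    by (rule add_four_block_mat) (use c in auto)
  also have "\<dots> = four_block_mat (Cc * M * ABc + Dc) (Cc * M * Bc) (CAc * M * ABc + CBc) (CAc * M * Bc + Dc)"
    using c by simp
  finally show ?thesis unfolding s1 s2 .
qed

lemma cm_zero: "cm (0\<^sub>m a b) = 0\<^sub>m a b"
  unfolding cm_def by (rule eq_matI) auto

lemma cm_carrier: "M \<in> carrier_mat a b \<Longrightarrow> cm M \<in> carrier_mat a b"
  unfolding cm_def by auto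

lemma minv_carrier:
  assumes "M \<in> carrier_mat k k" "det M \<noteq> 0"
  shows "minv M \<in> carrier_mat k k"
proof -
  have U: "M \<in> Units (ring_mat TYPE(complex) k undefined)"
    by (rule det_non_zero_imp_unit[OF assms])
  obtain N where N: "mat_inverse M = Some N"
    using mat_inverse(1)[OF assms(1), of undefined] U by (cases "mat_inverse M") auto
  show ?thesis unfolding minv_def N using mat_inverse(2)[OF assms(1) N] by simp
qed

lemma transfer_canon:
  assumes wf: "wf_real (A, B, C, D) n m p"
    and dz: "det (zIm z (A * A)) \<noteq> 0"
  shows "transfer (canon A B C D n m p) z =
         four_block_mat
           (cm C * minv (zIm z (A * A)) * cm (A * B) + cm D)
           (cm C * minv (zIm z (A * A)) * cm B)
           (cm (C * A) * minv (zIm z (A * A)) * cm (A * B) + cm (C * B))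
           (cm (C * A) * minv (zIm z (A * A)) * cm B + cm D)"
proof -
  have c: "A \<in> carrier_mat n n" "B \<in> carrier_mat n m" "C \<in> carrier_mat p n" "D \<in> carrier_mat p m"
    using wf unfolding wf_real_def by auto
  have zc: "zIm z (A * A) \<in> carrier_mat n n"
    unfolding zIm_def using c by (auto simp: cm_def)
  have Mc: "minv (zIm z (A * A)) \<in> carrier_mat n n" by (rule minv_carrier[OF zc dz])
  have AB: "A * B \<in> carrier_mat n m" "C * A \<in> carrier_mat p n" "C * B \<in> carrier_mat p m" using c by auto
  have r1: "cm (C @\<^sub>r C * A) = four_block_mat (cm C) (0\<^sub>m p 0) (cm (C * A)) (0\<^sub>m p 0)"
    unfolding append_rows_def cm_def
    by (subst map_four_block_mat[of _ p n _ 0 _ p]) (use c AB in \<open>auto simp: cm_zero[unfolded cm_def]\<close>)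
  have r2: "cm (four_block_mat (A * B) B (0\<^sub>m 0 m) (0\<^sub>m 0 m)) = four_block_mat (cm (A * B)) (cm B) (0\<^sub>m 0 m) (0\<^sub>m 0 m)"
    unfolding cm_def
    by (subst map_four_block_mat[of _ n m _ m _ 0]) (use c AB in \<open>auto simp: cm_zero[unfolded cm_def]\<close>)
  have r3: "cm (four_block_mat D (0\<^sub>m p m) (C * B) D) = four_block_mat (cm D) (0\<^sub>m p m) (cm (C * B)) (cm D)"
    unfolding cm_def
    by (subst map_four_block_mat[of _ p m _ m _ p]) (use c AB in \<open>auto simp: cm_zero[unfolded cm_def]\<close>)
  show ?thesis
    unfolding transfer_def canon_def prod.case r1 r2 r3
    by (rule block_calc) (use c AB Mc in \<open>auto intro: cm_carrier\<close>)
qed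

theorem proposition7p1:
  fixes A B C D :: "real mat" and T :: realization and n m p n' :: nat
  assumes "wf_real (A, B, C, D) n m p"
    and "wf_real T n' (2*m) (2*p)"
  shows "eq_repetition T (A, B, C, D) n m p \<longleftrightarrow>
    (\<forall>z. det (zIm z (state_mat T)) \<noteq> 0 \<longrightarrow> det (zIm z (A * A)) \<noteq> 0 \<longrightarrow>
       transfer T z =
         four_block_mat
           (cm C * minv (zIm z (A * A)) * cm (A * B) + cm D)
           (cm C * minv (zIm z (A * A)) * cm B)
           (cm (C * A) * minv (zIm z (A * A)) * cm (A * B) + cm (C * B))
           (cm (C * A) * minv (zIm z (A * A)) * cm B + cm D))"
proof -
  let ?R = "canon A B C D n m p"
  have rep: "is_repetition (A, B, C, D) n m p ?R" by (rule canon_rep[OF assms(1)])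
  have uniq: "R = ?R" if "is_repetition (A, B, C, D) n m p R" for R
  proof -
    obtain A2 B2 C2 D2 where R: "R = (A2, B2, C2, D2)" by (cases R) auto
    obtain A2' B2' C2' D2' where R': "?R = (A2', B2', C2', D2')" by (cases ?R) auto
    show ?thesis unfolding R R' by (rule rep_unique) (use that rep R R' in auto)
  qed
  have st: "state_mat ?R = A * A" unfolding state_mat_def canon_def by simp
  have E: "eq_repetition T (A, B, C, D) n m p \<longleftrightarrow> same_transfer T ?R"
    unfolding eq_repetition_def using rep uniq by blast
  show ?thesis
    unfolding E
    unfolding same_transfer_def st
    using transfer_canon[OF assms(1)] by auto
qed

end
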